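(* Let $d\ge2$ and $\tilde m>0$. There is a map $R:\mathbb R^{6d-3}\to\mathcal P_d$ (depending only on $d$ and $\tilde m$) such that the following holds. Let $p\in\mathcal P_d$ be nonzero and $\epsilon\in\mathbb R^{6d-3}$, and suppose there exists $z_0\in\mathbb T$ with $$\min_{1\le j\le d}\Big(|p(\nu^jz_0)|^2-(2d-1)\|\epsilon\|_\infty\Big)\ge\tilde m\|p\|_2^2.$$ Let $\tilde C=\frac{(1+\sqrt2)\sqrt d(2d-1)\|\epsilon\|_\infty+d\|p\|_2^2}{\sqrt d\,\tilde m\|p\|_2^2}$. Then $\tilde p=R(\widetilde{\mathcal A}(p,\epsilon))$ satisfies, for some $c_0\in\mathbb T$, $$\|\tilde p-c_0p\|_2\le\left(\frac{2+\sqrt2}{\tilde m}\,\frac{d-d\tilde C-1+\tilde C^d}{1-\tilde C}\sqrt d+\frac{1-\tilde C^d}{2\sqrt{\frac{\tilde m}{\sqrt d}}}\right)\frac{d(2d-1)}{1-\tilde C}\,\frac{\|\epsilon\|_\infty}{\|p\|_2}.$$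
   Context: $\mathbb T$ is the unit circle. $\mathcal P_d$ is the space of complex polynomials of degree at most $d-1$ with inner product $\langle p,q\rangle=\frac1{2\pi}\int_0^{2\pi}p(e^{it})\overline{q(e^{it})}dt$, so $\|p\|_2$ is the Euclidean norm of the coefficient vector. Let $\omega=e^{2\pi i/(2d-1)}$, $\nu=e^{2\pi i/d}$. The map $\mathcal A:\mathcal P_d\to\mathbb R^{6d-3}$ is $(\mathcal A(p))_j=|p(\omega^j)|^2$ ($1\le j\le 2d-1$), $|p(\omega^j)-p(\omega^j\nu)|^2$ ($2d\le j\le4d-2$), $|p(\omega^j)-ip(\omega^j\nu)|^2$ ($4d-1\le j\le 6d-3$), and $\widetilde{\mathcal A}(p,\epsilon)=\mathcal A(p)+\epsilon$; $\|\epsilon\|_\infty=\max_j|\epsilon_j|$. *)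

theory Defs
  imports "HOL-Analysis.Analysis" "HOL-Computational_Algebra.Polynomial"
begin

definition Pd :: "nat \<Rightarrow> complex poly set" where
  "Pd d = {p. degree p < d}"

text \<open>Euclidean norm of the coefficient vector (= L2 norm on the unit circle).\<close>
definition norm2 :: "nat \<Rightarrow> complex poly \<Rightarrow> real" where
  "norm2 d p = sqrt (\<Sum>k<d. (cmod (coeff p k))\<^sup>2)"

definition omega :: "nat \<Rightarrow> complex" where
  "omega d = cis (2 * pi / real (2 * d - 1))"

definition nu :: "nat \<Rightarrow> complex" where
  "nu d = cis (2 * pi / real d)"

text \<open>Measurement map A : P_d -> R^(6d-3); vectors are indexed by 1..6d-3 and
  are extended by 0 outside that range.\<close>
definition measA :: "nat \<Rightarrow> complex poly \<Rightarrow> nat \<Rightarrow> real" where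
  "measA d p j =
    (if 1 \<le> j \<and> j \<le> 2*d - 1 then (cmod (poly p (omega d ^ j)))\<^sup>2
     else if 2*d \<le> j \<and> j \<le> 4*d - 2 then
       (cmod (poly p (omega d ^ j) - poly p (omega d ^ j * nu d)))\<^sup>2
     else if 4*d - 1 \<le> j \<and> j \<le> 6*d - 3 then
       (cmod (poly p (omega d ^ j) - \<i> * poly p (omega d ^ j * nu d)))\<^sup>2
     else 0)"

definition measA_noisy :: "nat \<Rightarrow> complex poly \<Rightarrow> (nat \<Rightarrow> real) \<Rightarrow> nat \<Rightarrow> real" where
  "measA_noisy d p eps j =
    (if 1 \<le> j \<and> j \<le> 6*d - 3 then measA d p j + eps j else 0)"

definition sup_norm :: "nat \<Rightarrow> (nat \<Rightarrow> real) \<Rightarrow> real" where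
  "sup_norm d eps = Max ((\<lambda>j. \<bar>eps j\<bar>) ` {1..6*d - 3})"

end

theory Submission
  imports Defs
begin


lemma orth_cis:
  fixes M a b :: nat
  assumes M: "M > 0"
  shows "(\<Sum>i<M. (cis (2*pi/M) ^ (i+1)) ^ a * cnj ((cis (2*pi/M) ^ (i+1)) ^ b))
         = (if a mod M = b mod M then of_nat M else 0)"
proof -
  define u where "u = cis (2*pi/M * (real a - real b))"
  have trm: "(cis (2*pi/M) ^ (i+1)) ^ a * cnj ((cis (2*pi/M) ^ (i+1)) ^ b) = u ^ (i+1)" for i
  proof -
    have "(cis (2*pi/M) ^ (i+1)) ^ a * cnj ((cis (2*pi/M) ^ (i+1)) ^ b)
        = cis (real ((i+1)*a) * (2*pi/M)) * cis (- (real ((i+1)*b) * (2*pi/M)))"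
      by (simp only: power_mult[symmetric]) (simp only: Complex.DeMoivre cis_cnj)
    also have "\<dots> = cis (real (i+1) * (2*pi/M * (real a - real b)))"
      by (simp add: cis_mult algebra_simps diff_divide_distrib)
    also have "\<dots> = u ^ (i+1)" unfolding u_def Complex.DeMoivre ..
    finally show ?thesis .
  qed
  have uM: "u ^ M = 1"
  proof -
    have "u ^ M = cis (real M * (2*pi/M * (real a - real b)))" unfolding u_def Complex.DeMoivre ..
    also have "real M * (2*pi/M * (real a - real b)) = 2*pi*(real a - real b)" using M by (simp add: field_simps)
    also have "real a - real b \<in> \<int>" by (metis Ints_diff Ints_of_nat)
    then have "cis (2*pi*(real a - real b)) = 1" by (rule cis_multiple_2pi)
    finally show ?thesis .
  qed
  show ?thesis
  proof (cases "a mod M = b mod M")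
    case True
    then have "int a mod int M = int b mod int M" by (metis of_nat_mod)
    then have "int M dvd int a - int b" by (simp add: mod_eq_dvd_iff)
    then obtain k where k: "int a - int b = int M * k" by (auto elim: dvdE)
    have "real a - real b = real M * real_of_int k" using k by (metis of_int_diff of_int_mult of_int_of_nat_eq)
    then have "u = cis (2*pi*real_of_int k)" unfolding u_def using M by (simp add: field_simps)
    then have "u = 1" by simp
    then show ?thesis using True trm by simp
  next
    case False
    have "u \<noteq> 1"
    proof
      assume "u = 1"
      then have "sin (2*pi/M * (real a - real b)) = sin 0 \<and> cos (2*pi/M * (real a - real b)) = cos 0"
        unfolding u_def by (metis cis.sel(1) cis.sel(2) cis_zero complex.sel(1) complex.sel(2) one_complex.sel(1) one_complex.sel(2))
      then obtain n :: int where "2*pi/M * (real a - real b) = 0 + 2*pi*n" using sin_cos_eq_iff by blast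
      then have "2*pi*(real a - real b) = 2*pi*(real M * n)" using M by (simp add: field_simps)
      then have "real a - real b = real M * n" by (metis mult_cancel_left pi_neq_zero zero_neq_numeral mult_eq_0_iff)
      then have "int a - int b = int M * n" by (metis of_int_diff of_int_eq_iff of_int_mult of_int_of_nat_eq)
      then have "int M dvd int a - int b" by simp
      then have "int a mod int M = int b mod int M" by (simp add: mod_eq_dvd_iff)
      then show False using False by (metis of_nat_mod of_nat_eq_iff)
    qed
    have "(\<Sum>i<M. u^(i+1)) = u * (\<Sum>i<M. u^i)" by (simp add: sum_distrib_left)
    also have "\<dots> = 0" using geometric_sum[OF \<open>u \<noteq> 1\<close>, of M] uM by simp
    finally show ?thesis using False trm by simp
  qed
qed


lemma poly_sum_lt:
  fixes P :: "complex poly"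
  assumes "degree P < d"
  shows "poly P x = (\<Sum>a<d. coeff P a * x^a)"
proof -
  have "poly P x = (\<Sum>a\<le>degree P. coeff P a * x^a)" by (rule poly_altdef)
  also have "\<dots> = (\<Sum>a<d. coeff P a * x^a)"
    by (rule sum.mono_neutral_left) (use assms in \<open>auto simp: coeff_eq_0\<close>)
  finally show ?thesis .
qed

lemma poly_sq_expand:
  assumes "degree P < d"
  shows "complex_of_real ((cmod (poly P x))\<^sup>2)
     = (\<Sum>a<d. \<Sum>b<d. (coeff P a * cnj (coeff P b)) * (x^a * cnj (x^b)))"
proof -
  have "complex_of_real ((cmod (poly P x))\<^sup>2) = poly P x * cnj (poly P x)"
    by (rule complex_norm_square)
  also have "\<dots> = (\<Sum>a<d. coeff P a * x^a) * (\<Sum>b<d. cnj (coeff P b * x^b))"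
    using poly_sum_lt[OF assms] by simp
  also have "\<dots> = (\<Sum>a<d. \<Sum>b<d. (coeff P a * x^a) * cnj (coeff P b * x^b))"
    by (rule sum_product)
  also have "\<dots> = (\<Sum>a<d. \<Sum>b<d. (coeff P a * cnj (coeff P b)) * (x^a * cnj (x^b)))"
    by (simp add: mult_ac)
  finally show ?thesis .
qed

lemma unit_cnj: "cmod z = 1 \<Longrightarrow> z * cnj z = 1"
  by (metis complex_norm_square of_real_1 one_power2)

lemma mod_lt2: "(x::nat) < 2*N \<Longrightarrow> x mod N = (if x < N then x else x - N)"
  by (metis le_mod_geq linorder_not_le mod_less not_less_iff_gr_or_eq add_diff_inverse_nat
        mod_add_self1 mult_2 mod_less [of "x - N" N] diff_less_mono less_diff_conv2 order.strict_trans2)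

definition Lk :: "nat \<Rightarrow> nat \<Rightarrow> complex \<Rightarrow> complex" where
  "Lk d j z = (1 / of_nat (2*d-1)) * (\<Sum>k<2*d-1. z^k * cnj ((omega d ^ (j+1))^k))
               * (cnj z ^ (d-1) * (omega d ^ (j+1)) ^ (d-1))"

lemma omega_cis: "omega d = cis (2*pi / real (2*d-1))"
  unfolding omega_def by simp

lemma interp_mono:
  assumes d: "d \<ge> 1" and a: "a < d" and b: "b < d" and z: "cmod z = 1"
  shows "(\<Sum>j<2*d-1. ((omega d^(j+1))^a * cnj ((omega d^(j+1))^b)) * Lk d j z) = z^a * cnj (z^b)"
proof -
  define N where "N = 2*d-1"
  have N: "N > 0" using d unfolding N_def by simp
  define x where "x j = omega d ^ (j+1)" for j
  define k0 where "k0 = a + (d-1) - b"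
  have k0N: "k0 < N" using a b unfolding k0_def N_def by simp
  have modeq: "((a + (d-1)) mod N = (b + k) mod N) = (k = k0)" if k: "k < N" for k
  proof -
    have aN: "a + (d-1) < N" using a unfolding N_def by simp
    then have l: "(a + (d-1)) mod N = a + (d-1)" by simp
    have "b + k < 2*N" using b k d unfolding N_def by simp
    then have r: "(b+k) mod N = (if b + k < N then b+k else b+k-N)" by (rule mod_lt2)
    show ?thesis unfolding l r k0_def using k a b aN by auto
  qed
  have "(\<Sum>j<N. (x j^a * cnj (x j^b)) * Lk d j z)
      = (\<Sum>j<N. \<Sum>k<N. (1/of_nat N) * (z^k * cnj z^(d-1)) * (x j^(a+(d-1)) * cnj (x j^(b+k))))"
    unfolding Lk_def x_def N_def[symmetric]
    by (simp add: sum_distrib_left sum_distrib_right power_add mult_ac)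
  also have "\<dots> = (\<Sum>k<N. (1/of_nat N) * (z^k * cnj z^(d-1)) * (\<Sum>j<N. x j^(a+(d-1)) * cnj (x j^(b+k))))"
    by (subst sum.swap) (simp add: sum_distrib_left)
  also have "\<dots> = (\<Sum>k<N. (1/of_nat N) * (z^k * cnj z^(d-1)) * (if k = k0 then of_nat N else 0))"
  proof (rule sum.cong[OF refl])
    fix k assume "k \<in> {..<N}"
    then have "k < N" by simp
    have "(\<Sum>j<N. x j^(a+(d-1)) * cnj (x j^(b+k))) = (if (a + (d-1)) mod N = (b + k) mod N then of_nat N else 0)"
      unfolding x_def omega_cis N_def[symmetric] by (rule orth_cis[OF N])
    then show "(1/of_nat N) * (z^k * cnj z^(d-1)) * (\<Sum>j<N. x j^(a+(d-1)) * cnj (x j^(b+k)))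
       = (1/of_nat N) * (z^k * cnj z^(d-1)) * (if k = k0 then of_nat N else 0)"
      using modeq[OF \<open>k < N\<close>] by simp
  qed
  also have "\<dots> = z^k0 * cnj z^(d-1)"
    using k0N N by (simp add: if_distrib cong: if_cong)
  also have "\<dots> = z^a * cnj (z^b)"
  proof -
    have "z^k0 = z^a * z^(d-1-b)" unfolding k0_def using b by (simp add: power_add[symmetric])
    moreover have "cnj z^(d-1) = cnj z^(d-1-b) * cnj z^b" using b by (simp add: power_add[symmetric])
    moreover have "z^(d-1-b) * cnj z^(d-1-b) = 1"
      by (metis power_mult_distrib unit_cnj[OF z] power_one)
    ultimately show ?thesis
      by (metis (no_types, lifting) complex_cnj_power mult.assoc mult.commute mult.right_neutral)
  qed
  finally show ?thesis unfolding x_def N_def .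
qed



lemma interp_exact:
  fixes P :: "complex poly"
  assumes d: "d \<ge> 1" and P: "degree P < d" and z: "cmod z = 1"
  shows "(\<Sum>j<2*d-1. of_real ((cmod (poly P (omega d^(j+1))))\<^sup>2) * Lk d j z) = of_real ((cmod (poly P z))\<^sup>2)"
proof -
  have "(\<Sum>j<2*d-1. of_real ((cmod (poly P (omega d^(j+1))))\<^sup>2) * Lk d j z)
     = (\<Sum>j<2*d-1. \<Sum>a<d. \<Sum>b<d. (coeff P a * cnj (coeff P b)) * (((omega d^(j+1))^a * cnj ((omega d^(j+1))^b)) * Lk d j z))"
    by (simp only: poly_sq_expand[OF P] sum_distrib_right mult.assoc)
  also have "\<dots> = (\<Sum>a<d. \<Sum>b<d. (coeff P a * cnj (coeff P b)) * (\<Sum>j<2*d-1. ((omega d^(j+1))^a * cnj ((omega d^(j+1))^b)) * Lk d j z))"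
  proof -
    have "\<And>f::nat\<Rightarrow>nat\<Rightarrow>nat\<Rightarrow>complex. (\<Sum>j<2*d-1. \<Sum>a<d. \<Sum>b<d. f j a b) = (\<Sum>a<d. \<Sum>b<d. \<Sum>j<2*d-1. f j a b)"
    proof -
      fix f :: "nat\<Rightarrow>nat\<Rightarrow>nat\<Rightarrow>complex"
      have "(\<Sum>j<2*d-1. \<Sum>a<d. \<Sum>b<d. f j a b) = (\<Sum>a<d. \<Sum>j<2*d-1. \<Sum>b<d. f j a b)"
        by (rule sum.swap)
      also have "\<dots> = (\<Sum>a<d. \<Sum>b<d. \<Sum>j<2*d-1. f j a b)"
        by (rule sum.cong[OF refl], rule sum.swap)
      finally show "(\<Sum>j<2*d-1. \<Sum>a<d. \<Sum>b<d. f j a b) = (\<Sum>a<d. \<Sum>b<d. \<Sum>j<2*d-1. f j a b)" .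
    qed
    then show ?thesis by (simp only: sum_distrib_left)
  qed
  also have "\<dots> = (\<Sum>a<d. \<Sum>b<d. (coeff P a * cnj (coeff P b)) * (z^a * cnj (z^b)))"
  proof (intro sum.cong refl)
    fix a b assume "a \<in> {..<d}" "b \<in> {..<d}"
    then have "(\<Sum>j<2*d-1. ((omega d^(j+1))^a * cnj ((omega d^(j+1))^b)) * Lk d j z) = z^a * cnj (z^b)"
      using interp_mono[OF d _ _ z, of a b] by simp
    then show "(coeff P a * cnj (coeff P b)) * (\<Sum>j<2*d-1. ((omega d^(j+1))^a * cnj ((omega d^(j+1))^b)) * Lk d j z)
       = (coeff P a * cnj (coeff P b)) * (z^a * cnj (z^b))" by (simp only:)
  qed
  also have "\<dots> = of_real ((cmod (poly P z))\<^sup>2)" by (simp only: poly_sq_expand[OF P])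
  finally show ?thesis .
qed

lemma cmod_omega: "cmod (omega d) = 1" unfolding omega_def by simp
lemma cmod_nu: "cmod (nu d) = 1" unfolding nu_def by simp

lemma Lk_bound:
  assumes d: "d \<ge> 1" and z: "cmod z = 1"
  shows "cmod (Lk d j z) \<le> 1"
proof -
  define N where "N = 2*d-1"
  have N: "N > 0" using d unfolding N_def by simp
  have "cmod (\<Sum>k<N. z^k * cnj ((omega d ^ (j+1))^k)) \<le> (\<Sum>k<N. cmod (z^k * cnj ((omega d ^ (j+1))^k)))"
    by (rule norm_sum)
  also have "\<dots> = of_nat N" by (simp add: norm_mult norm_power z cmod_omega)
  finally have s: "cmod (\<Sum>k<N. z^k * cnj ((omega d ^ (j+1))^k)) \<le> N" .
  have "cmod (Lk d j z) = (1 / N) * cmod (\<Sum>k<N. z^k * cnj ((omega d ^ (j+1))^k))"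
    unfolding Lk_def N_def[symmetric] by (simp add: norm_mult norm_power z cmod_omega norm_divide)
  also have "\<dots> \<le> (1/N) * N" using s N by (intro mult_left_mono) auto
  finally show ?thesis using N by simp
qed

definition interp :: "nat \<Rightarrow> (nat \<Rightarrow> real) \<Rightarrow> nat \<Rightarrow> complex \<Rightarrow> real" where
  "interp d b off z = Re (\<Sum>j<2*d-1. of_real (b (off+j+1)) * Lk d j z)"

lemma Re_diff_of_real: "Re (A - complex_of_real r) = Re A - r" by simp

lemma interp_err:
  fixes P :: "complex poly"
  assumes d: "d \<ge> 1" and P: "degree P < d" and z: "cmod z = 1"
    and bnd: "\<And>j. j < 2*d-1 \<Longrightarrow> \<bar>b (off+j+1) - (cmod (poly P (omega d^(j+1))))\<^sup>2\<bar> \<le> e"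
  shows "\<bar>interp d b off z - (cmod (poly P z))\<^sup>2\<bar> \<le> real (2*d-1) * e"
proof -
  define w where "w = (\<Sum>j<2*d-1. of_real (b (off+j+1) - (cmod (poly P (omega d^(j+1))))\<^sup>2) * Lk d j z)"
  have "w = (\<Sum>j<2*d-1. of_real (b (off+j+1)) * Lk d j z) - (\<Sum>j<2*d-1. of_real ((cmod (poly P (omega d^(j+1))))\<^sup>2) * Lk d j z)"
    unfolding w_def by (simp only: of_real_diff left_diff_distrib sum_subtractf)
  also have "\<dots> = (\<Sum>j<2*d-1. of_real (b (off+j+1)) * Lk d j z) - of_real ((cmod (poly P z))\<^sup>2)"
    by (simp only: interp_exact[OF d P z])
  finally have "Re w = Re (\<Sum>j<2*d-1. of_real (b (off+j+1)) * Lk d j z) - (cmod (poly P z))\<^sup>2"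
    by (simp only: Re_diff_of_real)
  then have "Re w = interp d b off z - (cmod (poly P z))\<^sup>2"
    unfolding interp_def .
  then have eqw: "\<bar>interp d b off z - (cmod (poly P z))\<^sup>2\<bar> = \<bar>Re w\<bar>" by simp
  also have "\<bar>Re w\<bar> \<le> cmod w" by (rule abs_Re_le_cmod)
  also have "cmod w \<le> (\<Sum>j<2*d-1. cmod (of_real (b (off+j+1) - (cmod (poly P (omega d^(j+1))))\<^sup>2) * Lk d j z))"
    unfolding w_def by (rule norm_sum)
  also have "\<dots> \<le> (\<Sum>j<2*d-1. e)"
  proof (rule sum_mono)
    fix j assume "j \<in> {..<2*d-1}"
    then have hb: "\<bar>b (off+j+1) - (cmod (poly P (omega d^(j+1))))\<^sup>2\<bar> \<le> e" using bnd by simp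
    have hL: "cmod (Lk d j z) \<le> 1" by (rule Lk_bound[OF d z])
    show "cmod (of_real (b (off+j+1) - (cmod (poly P (omega d^(j+1))))\<^sup>2) * Lk d j z) \<le> e"
    proof -
      have "cmod (of_real (b (off+j+1) - (cmod (poly P (omega d^(j+1))))\<^sup>2) * Lk d j z)
          = \<bar>b (off+j+1) - (cmod (poly P (omega d^(j+1))))\<^sup>2\<bar> * cmod (Lk d j z)"
        by (simp only: norm_mult norm_of_real)
      also have "\<dots> \<le> e * 1" by (rule mult_mono) (use hb hL in auto)
      finally show ?thesis by simp
    qed
  qed
  also have "\<dots> = real (2*d-1) * e" by simp
  finally show ?thesis .
qed



lemma nu_cis: "nu d = cis (2*pi / real d)" unfolding nu_def by simp

lemma orth_pt:
  assumes d: "d > 0" and z: "cmod z = 1" and a: "a < d" and b: "b < d"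
  shows "(\<Sum>i<d. (nu d^(i+1)*z)^a * cnj ((nu d^(i+1)*z)^b)) = (if a = b then of_nat d else 0)"
proof -
  have "(\<Sum>i<d. (nu d^(i+1)*z)^a * cnj ((nu d^(i+1)*z)^b))
      = (z^a * cnj (z^b)) * (\<Sum>i<d. (nu d^(i+1))^a * cnj ((nu d^(i+1))^b))"
    by (simp add: sum_distrib_left power_mult_distrib mult_ac)
  also have "(\<Sum>i<d. (nu d^(i+1))^a * cnj ((nu d^(i+1))^b)) = (if a mod d = b mod d then of_nat d else 0)"
    unfolding nu_cis by (rule orth_cis[OF d])
  also have "(a mod d = b mod d) = (a = b)" using a b by simp
  finally show ?thesis
  proof -
    assume eq: "(\<Sum>i<d. (nu d^(i+1)*z)^a * cnj ((nu d^(i+1)*z)^b)) = z^a * cnj (z^b) * (if a = b then of_nat d else 0)"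
    have "z^a * cnj (z^a) = 1" by (metis complex_cnj_power power_mult_distrib unit_cnj[OF z] power_one)
    then show ?thesis using eq by auto
  qed
qed

lemma parseval:
  fixes P :: "complex poly"
  assumes d: "d > 0" and P: "degree P < d" and z: "cmod z = 1"
  shows "(\<Sum>i<d. (cmod (poly P (nu d^(i+1)*z)))\<^sup>2) = real d * (\<Sum>a<d. (cmod (coeff P a))\<^sup>2)"
proof -
  have "complex_of_real (\<Sum>i<d. (cmod (poly P (nu d^(i+1)*z)))\<^sup>2)
      = (\<Sum>i<d. \<Sum>a<d. \<Sum>b<d. (coeff P a * cnj (coeff P b)) * ((nu d^(i+1)*z)^a * cnj ((nu d^(i+1)*z)^b)))"
    by (simp only: of_real_sum poly_sq_expand[OF P])
  also have "\<dots> = (\<Sum>a<d. \<Sum>b<d. (coeff P a * cnj (coeff P b)) * (\<Sum>i<d. (nu d^(i+1)*z)^a * cnj ((nu d^(i+1)*z)^b)))"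
  proof -
    have "\<And>f::nat\<Rightarrow>nat\<Rightarrow>nat\<Rightarrow>complex. (\<Sum>j<d. \<Sum>a<d. \<Sum>b<d. f j a b) = (\<Sum>a<d. \<Sum>b<d. \<Sum>j<d. f j a b)"
    proof -
      fix f :: "nat\<Rightarrow>nat\<Rightarrow>nat\<Rightarrow>complex"
      have "(\<Sum>j<d. \<Sum>a<d. \<Sum>b<d. f j a b) = (\<Sum>a<d. \<Sum>j<d. \<Sum>b<d. f j a b)"
        by (rule sum.swap)
      also have "\<dots> = (\<Sum>a<d. \<Sum>b<d. \<Sum>j<d. f j a b)"
        by (rule sum.cong[OF refl], rule sum.swap)
      finally show "(\<Sum>j<d. \<Sum>a<d. \<Sum>b<d. f j a b) = (\<Sum>a<d. \<Sum>b<d. \<Sum>j<d. f j a b)" .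
    qed
    then show ?thesis by (simp only: sum_distrib_left)
  qed
  also have "\<dots> = (\<Sum>a<d. \<Sum>b<d. (coeff P a * cnj (coeff P b)) * (if a = b then of_nat d else 0))"
    by (intro sum.cong refl) (simp only: orth_pt[OF d z] lessThan_iff)
  also have "\<dots> = (\<Sum>a<d. of_nat d * (coeff P a * cnj (coeff P a)))"
    by (simp add: if_distrib mult_ac cong: if_cong)
  also have "\<dots> = complex_of_real (real d * (\<Sum>a<d. (cmod (coeff P a))\<^sup>2))"
    by (simp only: of_real_mult of_real_of_nat_eq of_real_sum complex_norm_square sum_distrib_left)
  finally show ?thesis by (simp only: of_real_eq_iff)
qed

definition recon :: "nat \<Rightarrow> complex \<Rightarrow> (nat \<Rightarrow> complex) \<Rightarrow> complex poly" where
  "recon d z v = (\<Sum>l<d. monom ((1/of_nat d) * (\<Sum>i<d. v i * cnj ((nu d^(i+1)*z)^l))) l)"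

lemma coeff_recon:
  "coeff (recon d z v) l = (if l < d then (1/of_nat d) * (\<Sum>i<d. v i * cnj ((nu d^(i+1)*z)^l)) else 0)"
  unfolding recon_def by (simp add: coeff_sum coeff_monom)

lemma degree_recon: "d > 0 \<Longrightarrow> degree (recon d z v) < d"
proof -
  assume d: "d > 0"
  have "degree (recon d z v) \<le> d - 1"
    by (rule degree_le) (simp add: coeff_recon)
  then show ?thesis using d by simp
qed

lemma recon_exact:
  fixes P :: "complex poly"
  assumes d: "d > 0" and P: "degree P < d" and z: "cmod z = 1" and l: "l < d"
  shows "(1/of_nat d) * (\<Sum>i<d. poly P (nu d^(i+1)*z) * cnj ((nu d^(i+1)*z)^l)) = coeff P l"
proof -
  have "(\<Sum>i<d. poly P (nu d^(i+1)*z) * cnj ((nu d^(i+1)*z)^l))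
      = (\<Sum>i<d. \<Sum>a<d. coeff P a * ((nu d^(i+1)*z)^a * cnj ((nu d^(i+1)*z)^l)))"
    by (simp only: poly_sum_lt[OF P] sum_distrib_right mult.assoc)
  also have "\<dots> = (\<Sum>a<d. coeff P a * (\<Sum>i<d. (nu d^(i+1)*z)^a * cnj ((nu d^(i+1)*z)^l)))"
    by (subst sum.swap) (simp only: sum_distrib_left)
  also have "\<dots> = (\<Sum>a<d. coeff P a * (if a = l then of_nat d else 0))"
    by (intro sum.cong refl) (simp only: orth_pt[OF d z _ l] lessThan_iff)
  also have "\<dots> = of_nat d * coeff P l" using l by (simp add: if_distrib cong: if_cong)
  finally show ?thesis using d by simp
qed

lemma recon_err:
  fixes P :: "complex poly"
  assumes d: "d > 0" and P: "degree P < d" and z: "cmod z = 1"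
  shows "cmod (coeff (recon d z v - smult c P) l) \<le> (1/real d) * (\<Sum>i<d. cmod (v i - c * poly P (nu d^(i+1)*z)))"
proof (cases "l < d")
  case False
  then have "coeff (recon d z v - smult c P) l = 0"
    using P by (simp add: coeff_recon coeff_eq_0)
  then show ?thesis by (simp add: sum_nonneg)
next
  case True
  have "coeff (recon d z v - smult c P) l
     = (1/of_nat d) * (\<Sum>i<d. v i * cnj ((nu d^(i+1)*z)^l)) - c * ((1/of_nat d) * (\<Sum>i<d. poly P (nu d^(i+1)*z) * cnj ((nu d^(i+1)*z)^l)))"
    using True by (simp only: coeff_diff coeff_smult coeff_recon if_True recon_exact[OF d P z True, symmetric])
  also have "\<dots> = (1/of_nat d) * (\<Sum>i<d. (v i - c * poly P (nu d^(i+1)*z)) * cnj ((nu d^(i+1)*z)^l))"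
    by (simp add: algebra_simps sum_subtractf sum_distrib_left)
  finally have eq: "coeff (recon d z v - smult c P) l = \<dots>" .
  have "cmod (\<Sum>i<d. (v i - c * poly P (nu d^(i+1)*z)) * cnj ((nu d^(i+1)*z)^l))
      \<le> (\<Sum>i<d. cmod ((v i - c * poly P (nu d^(i+1)*z)) * cnj ((nu d^(i+1)*z)^l)))" by (rule norm_sum)
  also have "\<dots> = (\<Sum>i<d. cmod (v i - c * poly P (nu d^(i+1)*z)))"
    by (simp add: norm_mult norm_power cmod_nu z)
  finally show ?thesis unfolding eq using d by (simp add: norm_mult norm_divide divide_right_mono)
qed

lemma norm2_le:
  assumes b: "\<beta> \<ge> 0" and h: "\<And>l. l < d \<Longrightarrow> cmod (coeff D l) \<le> \<beta>"
  shows "norm2 d D \<le> sqrt (real d) * \<beta>"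
proof -
  have "(\<Sum>k<d. (cmod (coeff D k))\<^sup>2) \<le> (\<Sum>k<d. \<beta>\<^sup>2)"
    by (intro sum_mono power_mono) (auto intro: h)
  then have "norm2 d D \<le> sqrt (real d * \<beta>\<^sup>2)" unfolding norm2_def by simp
  also have "\<dots> = sqrt (real d) * \<beta>" using b by (simp add: real_sqrt_mult)
  finally show ?thesis .
qed



definition Ft :: "nat \<Rightarrow> (nat \<Rightarrow> real) \<Rightarrow> complex \<Rightarrow> real" where
  "Ft d b z = interp d b 0 z"

definition Gt :: "nat \<Rightarrow> (nat \<Rightarrow> real) \<Rightarrow> complex \<Rightarrow> complex" where
  "Gt d b x = ((1 + \<i>) * (of_real (Ft d b x) + of_real (Ft d b (nu d * x)))
     - (of_real (interp d b (2*d-1) x) + \<i> * of_real (interp d b (2*(2*d-1)) x))) / 2"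

definition phi :: "nat \<Rightarrow> (nat \<Rightarrow> real) \<Rightarrow> complex \<Rightarrow> real" where
  "phi d b z = Min ((\<lambda>i. Ft d b (nu d^(i+1) * z)) ` {..<d})"

definition z1 :: "nat \<Rightarrow> (nat \<Rightarrow> real) \<Rightarrow> complex" where
  "z1 d b = (SOME z. cmod z = 1 \<and> (\<forall>w. cmod w = 1 \<longrightarrow> phi d b w \<le> phi d b z))"

primrec wph :: "nat \<Rightarrow> (nat \<Rightarrow> real) \<Rightarrow> nat \<Rightarrow> complex" where
  "wph d b 0 = 1"
| "wph d b (Suc i) = sgn (cnj (Gt d b (nu d^(i+1) * z1 d b))) * wph d b i"

definition vv :: "nat \<Rightarrow> (nat \<Rightarrow> real) \<Rightarrow> nat \<Rightarrow> complex" where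
  "vv d b i = of_real (sqrt (max 0 (Ft d b (nu d^(i+1) * z1 d b)))) * wph d b i"

definition Rmap :: "nat \<Rightarrow> (nat \<Rightarrow> real) \<Rightarrow> complex poly" where
  "Rmap d b = recon d (z1 d b) (vv d b)"

lemma continuous_on_Min_fam:
  fixes f :: "nat \<Rightarrow> complex \<Rightarrow> real"
  assumes "finite I" "I \<noteq> {}" "\<And>i. i \<in> I \<Longrightarrow> continuous_on S (f i)"
  shows "continuous_on S (\<lambda>z. Min ((\<lambda>i. f i z) ` I))"
  using assms
proof (induction I rule: finite_ne_induct)
  case (singleton x)
  then show ?case by simp
next
  case (insert x F)
  have "continuous_on S (\<lambda>z. min (f x z) (Min ((\<lambda>i. f i z) ` F)))"
    using insert by (intro continuous_intros) auto
  moreover have "\<And>z. Min ((\<lambda>i. f i z) ` insert x F) = min (f x z) (Min ((\<lambda>i. f i z) ` F))"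
    using insert by (simp add: Min_insert)
  ultimately show ?case by simp
qed

lemma continuous_Ft: "continuous_on S (Ft d b)"
  unfolding Ft_def interp_def Lk_def by (intro continuous_intros)

lemma continuous_phi: "d > 0 \<Longrightarrow> continuous_on S (phi d b)"
  unfolding phi_def
  by (rule continuous_on_Min_fam)
     (auto intro!: continuous_on_compose2[OF continuous_Ft] continuous_intros)

lemma z1_prop:
  assumes d: "d > 0"
  shows "cmod (z1 d b) = 1 \<and> (\<forall>w. cmod w = 1 \<longrightarrow> phi d b w \<le> phi d b (z1 d b))"
proof -
  have "\<exists>x\<in>sphere (0::complex) 1. \<forall>y\<in>sphere 0 1. phi d b y \<le> phi d b x"
    by (rule continuous_attains_sup) (auto intro: continuous_phi[OF d] exI[of _ 1])
  then have "\<exists>z. cmod z = 1 \<and> (\<forall>w. cmod w = 1 \<longrightarrow> phi d b w \<le> phi d b z)" by auto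
  then show ?thesis unfolding z1_def by (rule someI_ex)
qed

lemma G_identity:
  fixes a c :: complex
  shows "2 * (a * cnj c) = (1 + \<i>) * (of_real ((cmod a)\<^sup>2) + of_real ((cmod c)\<^sup>2))
     - (of_real ((cmod (a - c))\<^sup>2) + \<i> * of_real ((cmod (a - \<i> * c))\<^sup>2))"
  by (simp only: complex_norm_square) (simp add: algebra_simps)

lemma G_err:
  fixes a c :: complex and f1 f2 g1 g2 \<eta> :: real
  assumes "\<bar>f1 - (cmod a)\<^sup>2\<bar> \<le> \<eta>" "\<bar>f2 - (cmod c)\<^sup>2\<bar> \<le> \<eta>"
    "\<bar>g1 - (cmod (a - c))\<^sup>2\<bar> \<le> \<eta>" "\<bar>g2 - (cmod (a - \<i> * c))\<^sup>2\<bar> \<le> \<eta>"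
  shows "cmod (((1 + \<i>) * (of_real f1 + of_real f2) - (of_real g1 + \<i> * of_real g2)) / 2 - a * cnj c)
     \<le> (1 + sqrt 2) * \<eta>"
proof -
  define d1 where "d1 = f1 - (cmod a)\<^sup>2"
  define d2 where "d2 = f2 - (cmod c)\<^sup>2"
  define d3 where "d3 = g1 - (cmod (a - c))\<^sup>2"
  define d4 where "d4 = g2 - (cmod (a - \<i> * c))\<^sup>2"
  have "((1 + \<i>) * (of_real f1 + of_real f2) - (of_real g1 + \<i> * of_real g2)) / 2 - a * cnj c
      = ((1 + \<i>) * (of_real d1 + of_real d2) - (of_real d3 + \<i> * of_real d4)) / 2"
  proof -
    have ac: "a * cnj c = ((1 + \<i>) * (of_real ((cmod a)\<^sup>2) + of_real ((cmod c)\<^sup>2))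
     - (of_real ((cmod (a - c))\<^sup>2) + \<i> * of_real ((cmod (a - \<i> * c))\<^sup>2))) / 2"
      using G_identity[of a c] by (metis nonzero_mult_div_cancel_left zero_neq_numeral)
    have gen: "\<And>u1 u2 u3 u4 v1 v2 v3 v4::complex. ((1+\<i>)*(u1+u2) - (u3 + \<i> * u4))/2 - ((1+\<i>)*(v1+v2) - (v3 + \<i> * v4))/2
       = ((1+\<i>)*((u1-v1)+(u2-v2)) - ((u3-v3) + \<i> * (u4-v4)))/2"
      by (simp add: field_simps)
    show ?thesis unfolding ac d1_def d2_def d3_def d4_def of_real_diff by (rule gen)
  qed
  also have "cmod \<dots> \<le> (sqrt 2 * (\<bar>d1\<bar> + \<bar>d2\<bar>) + (\<bar>d3\<bar> + \<bar>d4\<bar>)) / 2"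
  proof -
    have c1: "cmod (1 + \<i>) = sqrt 2" by (simp add: cmod_def)
    have "cmod ((1 + \<i>) * (of_real d1 + of_real d2) - (of_real d3 + \<i> * of_real d4))
        \<le> cmod ((1 + \<i>) * (of_real d1 + of_real d2)) + cmod (of_real d3 + \<i> * of_real d4)"
      by (rule norm_triangle_ineq4)
    also have "\<dots> \<le> sqrt 2 * (\<bar>d1\<bar> + \<bar>d2\<bar>) + (\<bar>d3\<bar> + \<bar>d4\<bar>)"
    proof (rule add_mono)
      show "cmod ((1 + \<i>) * (of_real d1 + of_real d2)) \<le> sqrt 2 * (\<bar>d1\<bar> + \<bar>d2\<bar>)"
        unfolding norm_mult c1 by (rule mult_left_mono) (auto intro: order_trans[OF norm_triangle_ineq])
      show "cmod (of_real d3 + \<i> * of_real d4) \<le> \<bar>d3\<bar> + \<bar>d4\<bar>"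
        by (rule order_trans[OF norm_triangle_ineq]) (simp add: norm_mult)
    qed
    finally show ?thesis by (simp add: norm_divide)
  qed
  also have "\<dots> \<le> (sqrt 2 * (\<eta> + \<eta>) + (\<eta> + \<eta>)) / 2"
    using assms unfolding d1_def d2_def d3_def d4_def
    by (intro divide_right_mono add_mono mult_left_mono) auto
  also have "\<dots> = (1 + sqrt 2) * \<eta>" by (simp add: algebra_simps)
  finally show ?thesis .
qed



lemma sgn_diff_bound:
  fixes a b :: complex
  assumes b: "b \<noteq> 0"
  shows "cmod (sgn a - sgn b) \<le> 2 * cmod (a - b) / cmod b"
proof (cases "a = 0")
  case True
  then show ?thesis using b by (simp add: norm_sgn)
next
  case False
  have nb: "cmod b > 0" using b by simp
  have na: "cmod a > 0" using False by simp
  have "sgn a - sgn b = (1/cmod a - 1/cmod b) *\<^sub>R a + (1/cmod b) *\<^sub>R (a - b)"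
    by (simp add: sgn_div_norm divide_inverse scaleR_diff_right scaleR_diff_left)
  then have "cmod (sgn a - sgn b) \<le> \<bar>1/cmod a - 1/cmod b\<bar> * cmod a + (1/cmod b) * cmod (a - b)"
    by (metis (no_types, lifting) abs_of_nonneg divide_nonneg_nonneg norm_ge_zero norm_scaleR norm_triangle_ineq zero_le_one)
  also have "\<bar>1/cmod a - 1/cmod b\<bar> * cmod a = \<bar>cmod b - cmod a\<bar> / cmod b"
    using na nb by (simp add: field_simps abs_div)
  also have "\<bar>cmod b - cmod a\<bar> \<le> cmod (a - b)"
    by (metis abs_minus_commute norm_triangle_ineq3)
  then have "\<bar>cmod b - cmod a\<bar> / cmod b \<le> cmod (a - b) / cmod b" using nb by (simp add: divide_right_mono)
  finally show ?thesis by (simp add: field_simps)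
qed

lemma polar: "complex_of_real (cmod z) * sgn z = z"
  by (cases "z = 0") (simp_all add: sgn_eq)

lemma sgn_pos_real: "r > 0 \<Longrightarrow> sgn (complex_of_real r * w) = sgn w"
  by (simp add: sgn_mult sgn_of_real)

lemma sgn_cnj_sgn: "a \<noteq> 0 \<Longrightarrow> sgn (cnj (sgn a) * a) = 1"
proof -
  assume a: "a \<noteq> 0"
  have "cnj (sgn a) * a = complex_of_real (cmod a)"
    using a by (simp add: sgn_eq complex_norm_square[symmetric] power2_eq_square field_simps)
  then show ?thesis using a by (simp add: sgn_of_real)
qed

lemma sqrt_diff_le:
  fixes a b :: real
  assumes a: "a > 0" and b: "b \<ge> 0"
  shows "\<bar>sqrt a - sqrt b\<bar> \<le> \<bar>a - b\<bar> / sqrt a"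
proof -
  have sa: "sqrt a > 0" using a by simp
  have e: "a - b = (sqrt a - sqrt b) * (sqrt a + sqrt b)"
    using a b by (simp add: algebra_simps)
  have "\<bar>a - b\<bar> = \<bar>sqrt a - sqrt b\<bar> * (sqrt a + sqrt b)"
    unfolding e abs_mult using b sa by simp
  also have "\<dots> \<ge> \<bar>sqrt a - sqrt b\<bar> * sqrt a" using b by (intro mult_left_mono) auto
  finally show ?thesis using sa by (simp add: le_divide_eq)
qed

lemma sum_real_id: "(\<Sum>i<d. real i) = real d * (real d - 1) / 2"
  by (induction d) (simp_all add: field_simps)

lemma wph_norm: "cmod (wph d b i) \<le> 1"
proof (induction i)
  case 0 then show ?case by simp
next
  case (Suc i)
  have "cmod (wph d b (Suc i)) = cmod (sgn (cnj (Gt d b (nu d^(i+1) * z1 d b)))) * cmod (wph d b i)"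
    by (simp add: norm_mult)
  also have "\<dots> \<le> 1 * 1" using Suc by (intro mult_mono) (auto simp: norm_sgn)
  finally show ?case by simp
qed



lemma bern2:
  fixes h :: real
  assumes h: "h \<ge> 0"
  shows "(1+h)^k \<ge> 1 + real k * h + real k * (real k - 1) / 2 * h^2"
proof (induction k)
  case 0
  then show ?case by simp
next
  case (Suc k)
  have "(1+h)^(Suc k) = (1+h) * (1+h)^k" by simp
  also have "\<dots> \<ge> (1+h) * (1 + real k * h + real k * (real k - 1) / 2 * h^2)"
    using Suc h by (intro mult_left_mono) auto
  finally have a: "(1+h)^(Suc k) \<ge> (1+h) * (1 + real k * h + real k * (real k - 1) / 2 * h^2)" .
  have "(1+h) * (1 + real k * h + real k * (real k - 1) / 2 * h^2)
      = 1 + real (Suc k) * h + real (Suc k) * (real (Suc k) - 1) / 2 * h^2 + real k * (real k - 1) / 2 * h^3"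
    by (simp add: field_simps power2_eq_square power3_eq_cube)
  moreover have "real k * (real k - 1) / 2 * h^3 \<ge> 0"
  proof (cases k)
    case 0 then show ?thesis by simp
  next
    case (Suc j) then show ?thesis using h by simp
  qed
  ultimately show ?case using a by linarith
qed

lemma bern1:
  fixes h :: real
  assumes h: "h \<ge> 0"
  shows "(1+h)^k \<ge> 1 + real k * h"
proof -
  have "real k * (real k - 1) / 2 * h^2 \<ge> 0"
  proof (cases k)
    case 0 then show ?thesis by simp
  next
    case (Suc j) then show ?thesis by simp
  qed
  then show ?thesis using bern2[OF h, of k] by linarith
qed

lemma final_alg:
  fixes d :: nat and m r s Ct RHS \<eta> :: real
  assumes d: "d \<ge> 2" and m0: "0 < m" and m1: "m \<le> 1" and r: "r > 0" and s: "s \<ge> 0"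
    and \<eta>_def: "\<eta> = real (2*d-1) * s"
    and Ct_def: "Ct = ((1 + sqrt 2) * sqrt (real d) * real (2*d - 1) * s + real d * r\<^sup>2) / (sqrt (real d) * m * r\<^sup>2)"
    and RHS_def: "RHS = ((2 + sqrt 2) / m * ((real d - real d * Ct - 1 + Ct ^ d) / (1 - Ct)) * sqrt (real d)
               + (1 - Ct ^ d) / (2 * sqrt (m / sqrt (real d))))
             * (real d * real (2*d - 1) / (1 - Ct)) * (s / r)"
  shows "Ct > 1"
    and "\<eta> < m*r\<^sup>2/2 \<Longrightarrow> sqrt (real d) * \<eta> / (sqrt m * r) + r * (4*(1+sqrt 2)*\<eta>/(m*r\<^sup>2)) * (real d * (real d - 1)/2) \<le> RHS"
    and "\<eta> \<ge> m*r\<^sup>2/2 \<Longrightarrow> sqrt (real d) * sqrt ((real d + 1) * r\<^sup>2) + r \<le> RHS"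
proof -
  define D where "D = real d"
  define sd where "sd = sqrt D"
  define N' where "N' = real (2*d-1)"
  define w where "w = sqrt (m / sd)"
  have D2: "D \<ge> 2" using d unfolding D_def by simp
  have N'D: "N' = 2*D - 1" using d unfolding N'_def D_def by (simp add: of_nat_diff)
  have sd2: "sd \<ge> sqrt 2" unfolding sd_def using D2 by simp
  have sq2: "sqrt 2 \<ge> 1" by simp
  have sd1: "sd \<ge> 1" using sd2 sq2 by linarith
  have sdsq: "sd * sd = D" unfolding sd_def using D2 by simp
  have sdD: "sd \<le> D" using mult_left_mono[OF sd1, of sd] sdsq sd1 by simp
  have N'pos: "N' > 0" using N'D D2 by simp
  have eta: "\<eta> = N' * s" unfolding \<eta>_def N'_def ..
  have eta0: "\<eta> \<ge> 0" using eta N'pos s by simp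
  have Ct_eq: "Ct = ((1 + sqrt 2) * sd * \<eta> + D * r\<^sup>2) / (sd * m * r\<^sup>2)"
    unfolding sd_def D_def eta N'_def by (simp only: Ct_def mult.assoc)
  have Ctge: "Ct \<ge> sd / m"
  proof -
    have "Ct \<ge> (D * r\<^sup>2) / (sd * m * r\<^sup>2)" unfolding Ct_eq
      using eta0 sd1 m0 r by (intro divide_right_mono) auto
    also have "(D * r\<^sup>2) / (sd * m * r\<^sup>2) = sd / m" using sdsq[symmetric] r sd1 m0
      by (simp add: field_simps power2_eq_square)
    finally show ?thesis .
  qed
  have "sd / m \<ge> sd" using m0 m1 sd1 by (simp add: le_divide_eq)
  then have Ct1: "Ct \<ge> sqrt 2" using Ctge sd2 by linarith
  have sq2g: "sqrt 2 > 1" by simp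
  show Ct_gt: "Ct > 1" using Ct1 sq2g by linarith
  define h where "h = Ct - 1"
  have h0: "h > 0" unfolding h_def using Ct_gt by simp
  have Cth: "Ct = 1 + h" unfolding h_def by simp
  define Q where "Q = Ct^d - D*Ct + D - 1"
  define G where "G = Ct^d - 1"
  have Qge: "Q \<ge> D*(D-1)/2 * h^2" unfolding Q_def Cth D_def using bern2[of h d] h0
    by (simp add: algebra_simps)
  have Gge: "G \<ge> D * h" unfolding G_def Cth D_def using bern1[of h d] h0 by (simp add: algebra_simps)
  have w0: "w > 0" unfolding w_def using m0 sd1 by simp
  have XZ: "((D - D*Ct - 1 + Ct^d)/(1-Ct)) * (D*N'/(1-Ct)) = (Q/h^2) * (D*N')"
    unfolding Q_def h_def using Ct_gt by (simp add: field_simps power2_eq_square)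
  have YZ: "((1 - Ct^d)/(2*w)) * (D*N'/(1-Ct)) = (G/h) * (D*N'/(2*w))"
    unfolding G_def h_def using Ct_gt w0 by (simp add: field_simps)
  have RHS_eq: "RHS = ((2+sqrt 2)/m * sd * (((D - D*Ct - 1 + Ct^d)/(1-Ct)) * (D*N'/(1-Ct)))
       + ((1 - Ct^d)/(2*w)) * (D*N'/(1-Ct))) * (s/r)"
  proof -
    have gen: "\<And>a X Y Z u sd'::real. (a/m * X * sd' + Y) * Z * u = (a/m * sd' * (X*Z) + Y*Z) * u"
      by (simp add: algebra_simps)
    show ?thesis unfolding RHS_def D_def sd_def N'_def w_def by (rule gen)
  qed
  have Qh: "Q/h^2 \<ge> D*(D-1)/2" using Qge h0 by (simp add: le_divide_eq)
  have Gh: "G/h \<ge> D" using Gge h0 by (simp add: le_divide_eq)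
  define L where "L = ((2+sqrt 2)/m * sd * (D*(D-1)/2 * (D*N')) + D * (D*N'/(2*w))) * (s/r)"
  have RHS_L: "RHS \<ge> L"
    unfolding RHS_eq XZ YZ L_def
  proof (intro mult_right_mono add_mono mult_left_mono)
    show "D*(D-1)/2 \<le> Q/h^2" by (rule Qh)
    show "D \<le> G/h" by (rule Gh)
  qed (use m0 sd1 D2 N'pos w0 s r in auto)
  have L_eq: "L = (2+sqrt 2) * sd * D^2 * (D-1) * \<eta> / (2*m*r) + D^2 * \<eta> / (2*w*r)"
    unfolding L_def eta using m0 r w0 by (simp add: field_simps power2_eq_square)
  {
    assume small: "\<eta> < m*r\<^sup>2/2"
    have T2: "r * (4*(1+sqrt 2)*\<eta>/(m*r\<^sup>2)) * (D * (D - 1)/2) \<le> (2+sqrt 2) * sd * D^2 * (D-1) * \<eta> / (2*m*r)"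
    proof -
      have "r * (4*(1+sqrt 2)*\<eta>/(m*r\<^sup>2)) * (D * (D - 1)/2) = (4*(1+sqrt 2)) * (D*(D-1)*\<eta>/(2*m*r))"
        using r m0 by (simp add: field_simps power2_eq_square)
      also have "\<dots> \<le> ((2+sqrt 2) * sd * D) * (D*(D-1)*\<eta>/(2*m*r))"
      proof (rule mult_right_mono)
        have "sd * D \<ge> sqrt 2 * 2" using sd2 D2 sd1 by (intro mult_mono) auto
        then have "(2+sqrt 2) * (sd * D) \<ge> (2+sqrt 2) * (sqrt 2 * 2)" by (intro mult_left_mono) auto
        moreover have "(2+sqrt 2) * (sqrt 2 * 2) = 4*(1+sqrt 2)" by (simp add: algebra_simps)
        ultimately show "4*(1+sqrt 2) \<le> (2+sqrt 2) * sd * D" by (simp add: mult_ac)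
        show "0 \<le> D*(D-1)*\<eta>/(2*m*r)" using D2 eta0 m0 r by simp
      qed
      also have "\<dots> = (2+sqrt 2) * sd * D^2 * (D-1) * \<eta> / (2*m*r)" by (simp add: power2_eq_square mult_ac)
      finally show ?thesis .
    qed
    have T1: "sd * \<eta> / (sqrt m * r) \<le> D^2 * \<eta> / (2*w*r)"
    proof -
      have "m / sd \<le> m / 1" using m0 sd1 by (intro divide_left_mono) auto
      then have wm: "w \<le> sqrt m" unfolding w_def by simp
      have "D * 2 \<le> D * D" using D2 by (intro mult_left_mono) auto
      then have "sd * 2 \<le> D * D" using sdD by linarith
      then have "sd \<le> D^2/2" by (simp add: power2_eq_square)
      then have "sd * \<eta> / (sqrt m * r) \<le> (D^2/2) * \<eta> / (sqrt m * r)"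
        using eta0 m0 r by (intro divide_right_mono mult_right_mono) auto
      also have "\<dots> = D^2 * \<eta> / (2 * sqrt m * r)" by simp
      also have "\<dots> \<le> D^2 * \<eta> / (2*w*r)"
        using wm w0 r eta0 D2 m0 by (intro divide_left_mono mult_right_mono mult_pos_pos) auto
      finally show ?thesis .
    qed
    have "sqrt (real d) * \<eta> / (sqrt m * r) + r * (4*(1+sqrt 2)*\<eta>/(m*r\<^sup>2)) * (real d * (real d - 1)/2) \<le> L"
      unfolding L_eq using T1 T2 unfolding sd_def D_def by linarith
    then show "sqrt (real d) * \<eta> / (sqrt m * r) + r * (4*(1+sqrt 2)*\<eta>/(m*r\<^sup>2)) * (real d * (real d - 1)/2) \<le> RHS"
      using RHS_L by linarith
  }
  {
    assume large: "\<eta> \<ge> m*r\<^sup>2/2"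
    have lhs: "sqrt (real d) * sqrt ((real d + 1) * r\<^sup>2) + r \<le> (D + 2) * r"
    proof -
      have "sqrt (real d) * sqrt ((real d + 1) * r\<^sup>2) = sqrt (D * (D+1)) * r"
        unfolding D_def using r by (simp add: real_sqrt_mult)
      also have "sqrt (D * (D+1)) \<le> D + 1"
        using D2 by (intro real_le_lsqrt) (auto simp: power2_eq_square algebra_simps)
      then have "sqrt (D * (D+1)) * r \<le> (D+1) * r" using r by simp
      finally show ?thesis by (simp add: algebra_simps)
    qed
    have "(D+2) * r \<le> D^2 * (D-1) * r"
    proof -
      have "D^2 * (D-1) \<ge> D+2"
      proof -
        have "2 * 2 \<le> D * D" using D2 by (intro mult_mono) auto
        then have "D^2 * (D-1) \<ge> 4 * (D-1)" using D2 by (intro mult_right_mono) (auto simp: power2_eq_square)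
        moreover have "4*(D-1) \<ge> D+2" using D2 by (simp add: algebra_simps)
        ultimately show ?thesis by (rule order_trans[rotated])
      qed
      then show ?thesis using r by simp
    qed
    also have "\<dots> \<le> (2+sqrt 2) * sd * D^2 * (D-1) * \<eta> / (2*m*r)"
    proof -
      have e: "\<eta> / (2*m*r) \<ge> r/4" using large m0 r by (simp add: field_simps power2_eq_square)
      have c: "(2+sqrt 2) * sd \<ge> 4"
      proof -
        have "(2+sqrt 2) * sd \<ge> (2+sqrt 2) * sqrt 2" using sd2 by (intro mult_left_mono) auto
        moreover have "(2+sqrt 2) * sqrt 2 = 2 * sqrt 2 + 2" by (simp add: algebra_simps)
        ultimately show ?thesis using sq2 by linarith
      qed
      have "D^2 * (D-1) * r = (4 * (D^2*(D-1))) * (r/4)" by simp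
      also have "\<dots> \<le> ((2+sqrt 2) * sd * (D^2*(D-1))) * (\<eta> / (2*m*r))"
        using c e D2 r by (intro mult_mono) auto
      also have "\<dots> = (2+sqrt 2) * sd * D^2 * (D-1) * \<eta> / (2*m*r)" by simp
      finally show ?thesis .
    qed
    also have "\<dots> \<le> L" unfolding L_eq using D2 eta0 w0 r by simp
    finally show "sqrt (real d) * sqrt ((real d + 1) * r\<^sup>2) + r \<le> RHS" using lhs RHS_L by linarith
  }
qed



lemma omega_N: "d \<ge> 1 \<Longrightarrow> omega d ^ (2*d-1) = 1"
proof -
  assume d: "d \<ge> 1"
  have "omega d ^ (2*d-1) = cis (real (2*d-1) * (2*pi/real (2*d-1)))" unfolding omega_cis Complex.DeMoivre ..
  also have "real (2*d-1) * (2*pi/real (2*d-1)) = 2*pi" using d by simp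
  finally show ?thesis by simp
qed

lemma nu_d: "d \<ge> 1 \<Longrightarrow> nu d ^ d = 1"
proof -
  assume d: "d \<ge> 1"
  have "nu d ^ d = cis (real d * (2*pi/real d))" unfolding nu_cis Complex.DeMoivre ..
  also have "real d * (2*pi/real d) = 2*pi" using d by simp
  finally show ?thesis by simp
qed

lemma sup_norm_ge:
  assumes "1 \<le> k" "k \<le> 6*d-3"
  shows "\<bar>eps k\<bar> \<le> sup_norm d eps"
  unfolding sup_norm_def using assms by (intro Max_ge) auto

lemma measA_1: "d \<ge> 2 \<Longrightarrow> j < 2*d-1 \<Longrightarrow>
    measA_noisy d p eps (j+1) = (cmod (poly p (omega d^(j+1))))\<^sup>2 + eps (j+1)"
  unfolding measA_noisy_def measA_def by auto

lemma measA_2: "d \<ge> 2 \<Longrightarrow> j < 2*d-1 \<Longrightarrow>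
    measA_noisy d p eps ((2*d-1)+j+1) = (cmod (poly p (omega d^(j+1)) - poly p (omega d^(j+1) * nu d)))\<^sup>2 + eps ((2*d-1)+j+1)"
proof -
  assume d: "d \<ge> 2" and j: "j < 2*d-1"
  have oN: "omega d ^ (2*d-1) = 1" using omega_N[of d] d by simp
  have "omega d ^ ((2*d-1)+(j+1)) = omega d^(2*d-1) * omega d^(j+1)" by (rule power_add)
  then have o: "omega d ^ ((2*d-1)+j+1) = omega d^(j+1)" using oN by (simp add: add.assoc)
  show ?thesis unfolding measA_noisy_def measA_def o using d j by auto
qed

lemma measA_3: "d \<ge> 2 \<Longrightarrow> j < 2*d-1 \<Longrightarrow>
    measA_noisy d p eps (2*(2*d-1)+j+1) = (cmod (poly p (omega d^(j+1)) - \<i> * poly p (omega d^(j+1) * nu d)))\<^sup>2 + eps (2*(2*d-1)+j+1)"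
proof -
  assume d: "d \<ge> 2" and j: "j < 2*d-1"
  have oN: "omega d ^ (2*d-1) = 1" using omega_N[of d] d by simp
  have "omega d ^ ((2*d-1)*2+(j+1)) = (omega d^(2*d-1))^2 * omega d^(j+1)" by (simp only: power_add power_mult)
  then have o: "omega d ^ (2*(2*d-1)+j+1) = omega d^(j+1)" using oN by (simp add: add.assoc mult.commute)
  show ?thesis unfolding measA_noisy_def measA_def o using d j by auto
qed

lemma core:
  fixes d :: nat and m Ct :: real and p :: "complex poly" and eps :: "nat \<Rightarrow> real" and z0 :: complex
  assumes d: "d \<ge> 2" and m: "m > 0" and pP: "degree p < d" and p0: "p \<noteq> 0"
    and z0: "cmod z0 = 1"
    and hyp: "Min ((\<lambda>j. (cmod (poly p (nu d ^ j * z0)))\<^sup>2 - real (2*d - 1) * sup_norm d eps) ` {1..d})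
           \<ge> m * (norm2 d p)\<^sup>2"
    and Ct_def: "Ct = ((1 + sqrt 2) * sqrt (real d) * real (2*d - 1) * sup_norm d eps
                   + real d * (norm2 d p)\<^sup>2) / (sqrt (real d) * m * (norm2 d p)\<^sup>2)"
  shows "\<exists>c0. cmod c0 = 1 \<and>
             norm2 d (Rmap d (measA_noisy d p eps) - smult c0 p) \<le>
             ((2 + sqrt 2) / m * ((real d - real d * Ct - 1 + Ct ^ d) / (1 - Ct)) * sqrt (real d)
               + (1 - Ct ^ d) / (2 * sqrt (m / sqrt (real d))))
             * (real d * real (2*d - 1) / (1 - Ct)) * (sup_norm d eps / norm2 d p)"
proof -
  define b where "b = measA_noisy d p eps"
  define s where "s = sup_norm d eps"
  define \<eta> where "\<eta> = real (2*d-1) * s"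
  define r where "r = norm2 d p"
  define RHS where "RHS = ((2 + sqrt 2) / m * ((real d - real d * Ct - 1 + Ct ^ d) / (1 - Ct)) * sqrt (real d)
               + (1 - Ct ^ d) / (2 * sqrt (m / sqrt (real d))))
             * (real d * real (2*d - 1) / (1 - Ct)) * (s / r)"
  have d0: "d > 0" and d1: "d \<ge> 1" using d by auto
  have sb: "\<And>k. 1 \<le> k \<Longrightarrow> k \<le> 6*d-3 \<Longrightarrow> \<bar>eps k\<bar> \<le> s" unfolding s_def by (rule sup_norm_ge)
  have s0: "s \<ge> 0" using sb[of 1] d by fastforce
  have eta0: "\<eta> \<ge> 0" unfolding \<eta>_def using s0 by simp
  define P1 where "P1 = p - pcompose p [:0, nu d:]"
  define P2 where "P2 = p - smult \<i> (pcompose p [:0, nu d:])"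
  have "degree [:0, nu d:] \<le> 1" by simp
  then have "degree (pcompose p [:0, nu d:]) \<le> degree p"
    using degree_pcompose_le[of p "[:0, nu d:]"] by (metis mult.right_neutral mult_le_mono2 order_trans)
  then have degpc: "degree (pcompose p [:0, nu d:]) \<le> d - 1" using pP by simp
  have pd1: "degree p \<le> d - 1" using pP by simp
  have "degree P1 \<le> d - 1" unfolding P1_def by (rule degree_diff_le[OF pd1 degpc])
  then have P1d: "degree P1 < d" using d by simp
  have "degree (smult \<i> (pcompose p [:0, nu d:])) \<le> d - 1" using degpc degree_smult_le order_trans by blast
  then have "degree P2 \<le> d - 1" unfolding P2_def by (rule degree_diff_le[OF pd1])
  then have P2d: "degree P2 < d" using d by simp
  have polyP1: "\<And>x. poly P1 x = poly p x - poly p (x * nu d)" unfolding P1_def by (simp add: poly_pcompose)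
  have polyP2: "\<And>x. poly P2 x = poly p x - \<i> * poly p (x * nu d)" unfolding P2_def by (simp add: poly_pcompose)
  have E1: "\<bar>Ft d b z - (cmod (poly p z))\<^sup>2\<bar> \<le> \<eta>" if z: "cmod z = 1" for z
    unfolding Ft_def \<eta>_def
  proof (rule interp_err[OF d1 pP z])
    fix j assume j: "j < 2*d-1"
    show "\<bar>b (0+j+1) - (cmod (poly p (omega d^(j+1))))\<^sup>2\<bar> \<le> s"
      unfolding b_def using measA_1[OF d j, of p eps] sb[of "j+1"] j d by simp
  qed
  have E2: "\<bar>interp d b (2*d-1) z - (cmod (poly p z - poly p (z * nu d)))\<^sup>2\<bar> \<le> \<eta>" if z: "cmod z = 1" for z
    unfolding \<eta>_def polyP1[symmetric]
  proof (rule interp_err[OF d1 P1d z])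
    fix j assume j: "j < 2*d-1"
    show "\<bar>b ((2*d-1)+j+1) - (cmod (poly P1 (omega d^(j+1))))\<^sup>2\<bar> \<le> s"
      unfolding b_def polyP1 using measA_2[OF d j, of p eps] sb[of "(2*d-1)+j+1"] j d by simp
  qed
  have E3: "\<bar>interp d b (2*(2*d-1)) z - (cmod (poly p z - \<i> * poly p (z * nu d)))\<^sup>2\<bar> \<le> \<eta>" if z: "cmod z = 1" for z
    unfolding \<eta>_def polyP2[symmetric]
  proof (rule interp_err[OF d1 P2d z])
    fix j assume j: "j < 2*d-1"
    show "\<bar>b (2*(2*d-1)+j+1) - (cmod (poly P2 (omega d^(j+1))))\<^sup>2\<bar> \<le> s"
      unfolding b_def polyP2 using measA_3[OF d j, of p eps] sb[of "2*(2*d-1)+j+1"] j d by simp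
  qed
  have EG: "cmod (Gt d b x - poly p x * cnj (poly p (nu d * x))) \<le> (1 + sqrt 2) * \<eta>" if x: "cmod x = 1" for x
  proof -
    have nx: "cmod (nu d * x) = 1" using x by (simp add: norm_mult cmod_nu)
    have xc: "x * nu d = nu d * x" by (simp add: mult.commute)
    show ?thesis unfolding Gt_def
      by (rule G_err) (use E1[OF x] E1[OF nx] E2[OF x] E3[OF x] in \<open>simp_all add: xc\<close>)
  qed
  have r_def2: "r\<^sup>2 = (\<Sum>a<d. (cmod (coeff p a))\<^sup>2)" unfolding r_def norm2_def
    by (simp add: sum_nonneg)
  have par: "(\<Sum>i<d. (cmod (poly p (nu d^(i+1)*z)))\<^sup>2) = real d * r\<^sup>2" if z: "cmod z = 1" for z
    unfolding r_def2 by (rule parseval[OF d0 pP z])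
  have pmax: "(cmod (poly p z))\<^sup>2 \<le> real d * r\<^sup>2" if z: "cmod z = 1" for z
  proof -
    have eq: "nu d^((d-1)+1) * z = z" using nu_d[OF d1] d1 by simp
    have "(cmod (poly p z))\<^sup>2 = (cmod (poly p (nu d^((d-1)+1)*z)))\<^sup>2" by (simp only: eq)
    also have "\<dots> \<le> (\<Sum>i<d. (cmod (poly p (nu d^(i+1)*z)))\<^sup>2)"
      by (rule member_le_sum) (use d1 in auto)
    finally show ?thesis using par[OF z] by simp
  qed
  have r0: "r > 0"
  proof -
    define k where "k = degree p"
    have k: "coeff p k \<noteq> 0" unfolding k_def using p0 by simp
    then have "k \<le> degree p" by (rule le_degree)
    then have "k < d" using pP by simp
    then have "(cmod (coeff p k))\<^sup>2 \<le> (\<Sum>a<d. (cmod (coeff p a))\<^sup>2)" by (intro member_le_sum) auto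
    moreover have "(cmod (coeff p k))\<^sup>2 > 0" using k by simp
    ultimately have "r\<^sup>2 > 0" unfolding r_def2 by linarith
    moreover have "r \<ge> 0" unfolding r_def norm2_def by (simp add: sum_nonneg)
    ultimately show ?thesis by (cases "r = 0") auto
  qed
  have hz0: "(cmod (poly p (nu d^(i+1) * z0)))\<^sup>2 - \<eta> \<ge> m * r\<^sup>2" if i: "i < d" for i
  proof -
    have "(cmod (poly p (nu d^(i+1) * z0)))\<^sup>2 - \<eta> \<in> ((\<lambda>j. (cmod (poly p (nu d ^ j * z0)))\<^sup>2 - real (2*d - 1) * sup_norm d eps) ` {1..d})"
      unfolding \<eta>_def s_def using i by (intro image_eqI[of _ _ "i+1"]) auto
    then have "Min ((\<lambda>j. (cmod (poly p (nu d ^ j * z0)))\<^sup>2 - real (2*d - 1) * sup_norm d eps) ` {1..d})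
       \<le> (cmod (poly p (nu d^(i+1) * z0)))\<^sup>2 - \<eta>" by (intro Min_le) auto
    then show ?thesis using hyp unfolding r_def by linarith
  qed
  have mr: "m * r\<^sup>2 + \<eta> \<le> r\<^sup>2"
  proof -
    have "(\<Sum>i<d. m * r\<^sup>2 + \<eta>) \<le> (\<Sum>i<d. (cmod (poly p (nu d^(i+1) * z0)))\<^sup>2)"
      by (intro sum_mono) (use hz0 in fastforce)
    then have "real d * (m * r\<^sup>2 + \<eta>) \<le> real d * r\<^sup>2" using par[OF z0] by simp
    then show ?thesis using d0 by simp
  qed
  have r20: "r\<^sup>2 > 0" using r0 by simp
  have "m * r\<^sup>2 \<le> 1 * r\<^sup>2" using mr eta0 by linarith
  then have m1: "m \<le> 1" using r20 by (simp only: mult_le_cancel_right_pos)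
  have "m * r\<^sup>2 > 0" using m r20 by simp
  then have eta_r: "\<eta> \<le> r\<^sup>2" using mr by linarith
  define Z1 where "Z1 = z1 d b"
  have Z1: "cmod Z1 = 1" and Z1max: "\<And>w. cmod w = 1 \<Longrightarrow> phi d b w \<le> phi d b Z1"
    using z1_prop[OF d0, of b] unfolding Z1_def by auto
  have nz: "cmod (nu d^(i+1) * z) = 1" if "cmod z = 1" for i z using that by (simp add: norm_mult norm_power cmod_nu)
  have Fge: "Ft d b (nu d^(i+1) * Z1) \<ge> m * r\<^sup>2" if i: "i < d" for i
  proof -
    have "phi d b z0 \<ge> m * r\<^sup>2" unfolding phi_def
    proof (subst Min_ge_iff)
      show "\<forall>a\<in>(\<lambda>i. Ft d b (nu d^(i+1) * z0)) ` {..<d}. m * r\<^sup>2 \<le> a"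
      proof
        fix a assume "a \<in> (\<lambda>i. Ft d b (nu d^(i+1) * z0)) ` {..<d}"
        then obtain i where i: "i < d" and a: "a = Ft d b (nu d^(i+1) * z0)" by auto
        show "m * r\<^sup>2 \<le> a" unfolding a using E1[OF nz[OF z0, of i]] hz0[OF i] by linarith
      qed
    qed (use d0 in auto)
    also have "\<dots> \<le> phi d b Z1" by (rule Z1max[OF z0])
    also have "\<dots> \<le> Ft d b (nu d^(i+1) * Z1)" unfolding phi_def using i by (intro Min_le) auto
    finally show ?thesis .
  qed
  define x where "x i = nu d^(i+1) * Z1" for i
  have xu: "cmod (x i) = 1" for i unfolding x_def by (rule nz[OF Z1])
  have xs: "nu d * x i = x (Suc i)" for i unfolding x_def by (simp add: mult.assoc)
  have vv_eq: "vv d b i = complex_of_real (sqrt (max 0 (Ft d b (x i)))) * wph d b i" for i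
    unfolding vv_def x_def Z1_def ..
  have Rm: "Rmap d b = recon d Z1 (vv d b)" unfolding Rmap_def Z1_def ..
  have RHS_alg: "Ct > 1"
    "\<eta> < m*r\<^sup>2/2 \<Longrightarrow> sqrt (real d) * \<eta> / (sqrt m * r) + r * (4*(1+sqrt 2)*\<eta>/(m*r\<^sup>2)) * (real d * (real d - 1)/2) \<le> RHS"
    "\<eta> \<ge> m*r\<^sup>2/2 \<Longrightarrow> sqrt (real d) * sqrt ((real d + 1) * r\<^sup>2) + r \<le> RHS"
  proof -
    have Ct': "Ct = ((1 + sqrt 2) * sqrt (real d) * real (2*d - 1) * s + real d * r\<^sup>2) / (sqrt (real d) * m * r\<^sup>2)"
      unfolding r_def s_def by (rule Ct_def)
    note fa = final_alg[OF d m m1 r0 s0 \<eta>_def Ct' RHS_def]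
    show "Ct > 1" by (rule fa(1))
    show "\<eta> < m*r\<^sup>2/2 \<Longrightarrow> sqrt (real d) * \<eta> / (sqrt m * r) + r * (4*(1+sqrt 2)*\<eta>/(m*r\<^sup>2)) * (real d * (real d - 1)/2) \<le> RHS" by (rule fa(2))
    show "\<eta> \<ge> m*r\<^sup>2/2 \<Longrightarrow> sqrt (real d) * sqrt ((real d + 1) * r\<^sup>2) + r \<le> RHS" by (rule fa(3))
  qed
  show ?thesis
  proof (cases "\<eta> < m*r\<^sup>2/2")
    case True
    define K where "K = 4*(1+sqrt 2)*\<eta>/(m*r\<^sup>2)"
    have r20: "r\<^sup>2 > 0" using r0 by simp
    have K0: "K \<ge> 0" unfolding K_def using eta0 m r20 by simp
    have mr0: "m * r\<^sup>2 > 0" using m r20 by simp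
    have Fx: "Ft d b (x i) \<ge> m * r\<^sup>2" if i: "i < d" for i unfolding x_def by (rule Fge[OF i])
    have sq: "(cmod (poly p (x i)))\<^sup>2 > m*r\<^sup>2/2" if i: "i < d" for i
      using E1[OF xu[of i]] Fx[OF i] True by linarith
    have pne: "poly p (x i) \<noteq> 0" if i: "i < d" for i
    proof
      assume "poly p (x i) = 0"
      moreover have "m * r\<^sup>2 > 0" using m r20 by simp
      ultimately show False using sq[OF i] by simp
    qed
    have sqg: "cmod (poly p (x i)) \<ge> sqrt (m*r\<^sup>2/2)" if i: "i < d" for i
    proof -
      have "sqrt (m*r\<^sup>2/2) \<le> sqrt ((cmod (poly p (x i)))\<^sup>2)" using sq[OF i] by (intro real_sqrt_le_mono) simp
      then show ?thesis by simp
    qed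
    define c where "c = cnj (sgn (poly p (x 0)))"
    have c1: "cmod c = 1" unfolding c_def using pne[OF d0] by (simp add: norm_sgn)
    have Eb: "cmod (wph d b i - sgn (c * poly p (x i))) \<le> real i * K" if "i < d" for i
      using that
    proof (induction i)
      case 0
      have "sgn (c * poly p (x 0)) = 1" unfolding c_def by (rule sgn_cnj_sgn[OF pne[OF d0]])
      then show ?case by simp
    next
      case (Suc i)
      have i: "i < d" and si: "Suc i < d" using Suc.prems by auto
      have IH: "cmod (wph d b i - sgn (c * poly p (x i))) \<le> real i * K" using Suc.IH i by simp
      define G where "G = poly p (x i) * cnj (poly p (x (Suc i)))"
      define Gh where "Gh = Gt d b (x i)"
      have wS: "wph d b (Suc i) = sgn (cnj Gh) * wph d b i" unfolding Gh_def x_def Z1_def by simp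
      have sS: "sgn (c * poly p (x (Suc i))) = sgn (cnj G) * sgn (c * poly p (x i))"
      proof -
        have eq: "cnj G * (c * poly p (x i)) = complex_of_real ((cmod (poly p (x i)))\<^sup>2) * (c * poly p (x (Suc i)))"
          unfolding G_def complex_norm_square by (simp add: mult_ac)
        have pos: "(cmod (poly p (x i)))\<^sup>2 > 0" using pne[OF i] by simp
        have "sgn (cnj G) * sgn (c * poly p (x i)) = sgn (cnj G * (c * poly p (x i)))" by (simp only: sgn_mult)
        also have "\<dots> = sgn (c * poly p (x (Suc i)))" unfolding eq by (rule sgn_pos_real[OF pos])
        finally show ?thesis by simp
      qed
      have Gpos: "cmod G \<ge> m*r\<^sup>2/2"
      proof -
        have "cmod G = cmod (poly p (x i)) * cmod (poly p (x (Suc i)))" unfolding G_def by (simp add: norm_mult)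
        also have "\<dots> \<ge> sqrt (m*r\<^sup>2/2) * sqrt (m*r\<^sup>2/2)"
          using sqg[OF i] sqg[OF si] mr0 by (intro mult_mono) auto
        also have "sqrt (m*r\<^sup>2/2) * sqrt (m*r\<^sup>2/2) = m*r\<^sup>2/2" using mr0 by simp
        finally show ?thesis .
      qed
      have G0: "G \<noteq> 0" using Gpos mr0 by auto
      have dG: "cmod (Gh - G) \<le> (1 + sqrt 2) * \<eta>" unfolding Gh_def G_def xs[symmetric] by (rule EG[OF xu])
      have "cmod (sgn (cnj Gh) - sgn (cnj G)) \<le> 2 * cmod (cnj Gh - cnj G) / cmod (cnj G)"
        by (rule sgn_diff_bound) (use G0 in simp)
      also have "\<dots> = 2 * cmod (Gh - G) / cmod G" by (metis complex_cnj_diff complex_mod_cnj)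
      also have "\<dots> \<le> 2 * ((1 + sqrt 2) * \<eta>) / (m*r\<^sup>2/2)"
        using dG Gpos mr0 eta0 by (intro frac_le) auto
      also have "\<dots> = K" unfolding K_def by (simp add: field_simps)
      finally have dsg: "cmod (sgn (cnj Gh) - sgn (cnj G)) \<le> K" .
      have "wph d b (Suc i) - sgn (c * poly p (x (Suc i)))
          = (sgn (cnj Gh) - sgn (cnj G)) * wph d b i + sgn (cnj G) * (wph d b i - sgn (c * poly p (x i)))"
        unfolding wS sS by (simp add: algebra_simps)
      then have "cmod (wph d b (Suc i) - sgn (c * poly p (x (Suc i))))
          \<le> cmod (sgn (cnj Gh) - sgn (cnj G)) * cmod (wph d b i) + cmod (sgn (cnj G)) * cmod (wph d b i - sgn (c * poly p (x i)))"
        by (metis norm_mult norm_triangle_ineq)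
      also have "\<dots> \<le> K * 1 + 1 * (real i * K)"
        using dsg IH wph_norm[of d b i] K0 by (intro add_mono mult_mono) (auto simp: norm_sgn)
      finally show ?case by (simp add: algebra_simps)
    qed
    have Err: "cmod (vv d b i - c * poly p (x i)) \<le> \<eta> / (sqrt m * r) + sqrt (real d * r\<^sup>2) * (real i * K)"
      if i: "i < d" for i
    proof -
      define F where "F = Ft d b (x i)"
      define si where "si = cmod (poly p (x i))"
      define ri where "ri = sqrt F"
      have F0: "F \<ge> m * r\<^sup>2" unfolding F_def by (rule Fx[OF i])
      have Fp: "F > 0" using F0 mr0 by linarith
      have vv': "vv d b i = complex_of_real ri * wph d b i" unfolding vv_eq ri_def F_def using Fp[unfolded F_def] by simp
      have cp: "c * poly p (x i) = complex_of_real si * sgn (c * poly p (x i))"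
        unfolding si_def using polar[of "c * poly p (x i)"] c1 by (simp add: norm_mult)
      have "vv d b i - c * poly p (x i) = complex_of_real (ri - si) * wph d b i + complex_of_real si * (wph d b i - sgn (c * poly p (x i)))"
        unfolding vv' by (subst cp) (simp add: algebra_simps)
      then have "cmod (vv d b i - c * poly p (x i)) \<le> \<bar>ri - si\<bar> * cmod (wph d b i) + si * cmod (wph d b i - sgn (c * poly p (x i)))"
        unfolding si_def by (metis (no_types, lifting) abs_norm_cancel norm_mult norm_of_real norm_triangle_ineq)
      also have "\<dots> \<le> (\<eta> / (sqrt m * r)) * 1 + sqrt (real d * r\<^sup>2) * (real i * K)"
      proof (intro add_mono mult_mono)
        have "\<bar>ri - si\<bar> = \<bar>sqrt F - sqrt (si\<^sup>2)\<bar>" unfolding ri_def si_def by simp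
        also have "\<dots> \<le> \<bar>F - si\<^sup>2\<bar> / sqrt F" by (rule sqrt_diff_le[OF Fp]) simp
        also have "\<dots> \<le> \<eta> / (sqrt m * r)"
        proof (rule frac_le)
          show "\<bar>F - si\<^sup>2\<bar> \<le> \<eta>" unfolding F_def si_def by (rule E1[OF xu])
          have "sqrt (m * r\<^sup>2) \<le> sqrt F" using F0 by simp
          then show "sqrt m * r \<le> sqrt F" using r0 m by (simp add: real_sqrt_mult)
          show "0 < sqrt m * r" using m r0 by simp
        qed (use eta0 in auto)
        finally show "\<bar>ri - si\<bar> \<le> \<eta> / (sqrt m * r)" .
        show "si \<le> sqrt (real d * r\<^sup>2)" unfolding si_def using pmax[OF xu[of i]] by (simp add: real_le_rsqrt)
        show "cmod (wph d b i - sgn (c * poly p (x i))) \<le> real i * K" by (rule Eb[OF i])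
      qed (use wph_norm eta0 m r0 in auto)
      finally show ?thesis by simp
    qed
    define \<beta> where "\<beta> = (1/real d) * (\<Sum>i<d. \<eta> / (sqrt m * r) + sqrt (real d * r\<^sup>2) * (real i * K))"
    have cb: "cmod (coeff (recon d Z1 (vv d b) - smult c p) l) \<le> \<beta>" if "l < d" for l
    proof -
      have "cmod (coeff (recon d Z1 (vv d b) - smult c p) l) \<le> (1/real d) * (\<Sum>i<d. cmod (vv d b i - c * poly p (nu d^(i+1)*Z1)))"
        by (rule recon_err[OF d0 pP Z1])
      also have "\<dots> \<le> \<beta>" unfolding \<beta>_def using Err d0 unfolding x_def
        by (intro mult_left_mono sum_mono) auto
      finally show ?thesis .
    qed
    have b0: "\<beta> \<ge> 0" unfolding \<beta>_def using eta0 m r0 K0 by (intro mult_nonneg_nonneg sum_nonneg add_nonneg_nonneg) auto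
    have "norm2 d (Rmap d b - smult c p) \<le> sqrt (real d) * \<beta>" unfolding Rm by (rule norm2_le[OF b0 cb])
    also have "sqrt (real d) * \<beta> = sqrt (real d) * \<eta> / (sqrt m * r) + r * K * (real d * (real d - 1)/2)"
    proof -
      have "(\<Sum>i<d. \<eta> / (sqrt m * r) + sqrt (real d * r\<^sup>2) * (real i * K))
          = real d * (\<eta> / (sqrt m * r)) + sqrt (real d * r\<^sup>2) * K * (\<Sum>i<d. real i)"
        by (simp add: sum.distrib sum_distrib_left sum_distrib_right mult_ac)
      also have "\<dots> = real d * (\<eta> / (sqrt m * r)) + sqrt (real d) * r * K * (real d * (real d - 1) / 2)"
        using r0 by (simp add: sum_real_id real_sqrt_mult)
      finally have e: "(\<Sum>i<d. \<eta> / (sqrt m * r) + sqrt (real d * r\<^sup>2) * (real i * K)) = \<dots>" .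
      have sdd: "sqrt (real d) * sqrt (real d) = real d" by simp
      show ?thesis unfolding \<beta>_def e using d0
        by (simp add: field_simps sdd)
    qed
    also have "\<dots> \<le> RHS" using RHS_alg(2)[OF True] unfolding K_def by simp
    finally show ?thesis using c1 unfolding RHS_def b_def s_def r_def by blast

  next
    case False
    then have large: "\<eta> \<ge> m*r\<^sup>2/2" by simp
    have vb: "cmod (vv d b i) \<le> sqrt ((real d + 1) * r\<^sup>2)" if i: "i < d" for i
    proof -
      have "Ft d b (x i) \<le> (cmod (poly p (x i)))\<^sup>2 + \<eta>" using E1[OF xu[of i]] by linarith
      also have "\<dots> \<le> (real d + 1) * r\<^sup>2" using pmax[OF xu[of i]] eta_r by (simp add: algebra_simps)
      finally have Fb: "max 0 (Ft d b (x i)) \<le> (real d + 1) * r\<^sup>2" using r0 by simp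
      have "cmod (vv d b i) = sqrt (max 0 (Ft d b (x i))) * cmod (wph d b i)"
        unfolding vv_eq by (simp add: norm_mult)
      also have "\<dots> \<le> sqrt ((real d + 1) * r\<^sup>2) * 1"
        using Fb wph_norm[of d b i] by (intro mult_mono) auto
      finally show ?thesis by simp
    qed
    have cb: "cmod (coeff (recon d Z1 (vv d b)) l) \<le> sqrt ((real d + 1) * r\<^sup>2)" if "l < d" for l
    proof -
      have "cmod (coeff (recon d Z1 (vv d b) - smult 0 p) l) \<le> (1/real d) * (\<Sum>i<d. cmod (vv d b i - 0 * poly p (nu d^(i+1)*Z1)))"
        by (rule recon_err[OF d0 pP Z1])
      also have "\<dots> \<le> (1/real d) * (\<Sum>i<d. sqrt ((real d + 1) * r\<^sup>2))"
        using vb d0 by (intro mult_left_mono sum_mono) auto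
      also have "\<dots> = sqrt ((real d + 1) * r\<^sup>2)" using d0 by simp
      finally show ?thesis by simp
    qed
    have nR: "norm2 d (Rmap d b) \<le> sqrt (real d) * sqrt ((real d + 1) * r\<^sup>2)"
      unfolding Rm by (rule norm2_le[OF _ cb]) simp
    have n2L: "norm2 d q = L2_set (\<lambda>k. cmod (coeff q k)) {..<d}" for q unfolding norm2_def L2_set_def ..
    have "norm2 d (Rmap d b - smult 1 p) \<le> L2_set (\<lambda>k. cmod (coeff (Rmap d b) k) + cmod (coeff p k)) {..<d}"
      unfolding n2L by (rule L2_set_mono) (auto intro: norm_triangle_ineq4)
    also have "\<dots> \<le> norm2 d (Rmap d b) + norm2 d p" unfolding n2L by (rule L2_set_triangle_ineq)
    also have "\<dots> \<le> sqrt (real d) * sqrt ((real d + 1) * r\<^sup>2) + r" using nR unfolding r_def by simp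
    also have "\<dots> \<le> RHS" by (rule RHS_alg(3)[OF large])
    finally show ?thesis unfolding RHS_def b_def s_def r_def by (intro exI[of _ 1]) simp

  qed
qed


theorem mainTheorem12:
  fixes d :: nat and mt :: real
  assumes "d \<ge> 2" and "mt > 0"
  shows "\<exists>R :: (nat \<Rightarrow> real) \<Rightarrow> complex poly.
    (\<forall>b. R b \<in> Pd d) \<and>
    (\<forall>(p :: complex poly) (eps :: nat \<Rightarrow> real).
      p \<in> Pd d \<longrightarrow> p \<noteq> 0 \<longrightarrow>
      (\<exists>z0. cmod z0 = 1 \<and>
         Min ((\<lambda>j. (cmod (poly p (nu d ^ j * z0)))\<^sup>2 - real (2*d - 1) * sup_norm d eps) ` {1..d})
           \<ge> mt * (norm2 d p)\<^sup>2) \<longrightarrow>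
      (let Ct = ((1 + sqrt 2) * sqrt (real d) * real (2*d - 1) * sup_norm d eps
                   + real d * (norm2 d p)\<^sup>2) / (sqrt (real d) * mt * (norm2 d p)\<^sup>2)
       in Ct \<noteq> 1 \<longrightarrow>
          (\<exists>c0. cmod c0 = 1 \<and>
             norm2 d (R (measA_noisy d p eps) - smult c0 p) \<le>
             ((2 + sqrt 2) / mt * ((real d - real d * Ct - 1 + Ct ^ d) / (1 - Ct)) * sqrt (real d)
               + (1 - Ct ^ d) / (2 * sqrt (mt / sqrt (real d))))
             * (real d * real (2*d - 1) / (1 - Ct)) * (sup_norm d eps / norm2 d p))))"
proof -
  have d0: "d > 0" using assms(1) by simp
  show ?thesis
  proof (intro exI[of _ "Rmap d"] conjI allI impI)
    fix b show "Rmap d b \<in> Pd d" unfolding Pd_def Rmap_def using degree_recon[OF d0] by simp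
  next
    fix p :: "complex poly" and eps :: "nat \<Rightarrow> real"
    assume pP: "p \<in> Pd d" and p0: "p \<noteq> 0"
      and ex: "\<exists>z0. cmod z0 = 1 \<and>
         Min ((\<lambda>j. (cmod (poly p (nu d ^ j * z0)))\<^sup>2 - real (2*d - 1) * sup_norm d eps) ` {1..d})
           \<ge> mt * (norm2 d p)\<^sup>2"
    then obtain z0 where z0: "cmod z0 = 1" and hyp: "Min ((\<lambda>j. (cmod (poly p (nu d ^ j * z0)))\<^sup>2 - real (2*d - 1) * sup_norm d eps) ` {1..d})
           \<ge> mt * (norm2 d p)\<^sup>2" by blast
    have deg: "degree p < d" using pP unfolding Pd_def by simp
    show "let Ct = ((1 + sqrt 2) * sqrt (real d) * real (2*d - 1) * sup_norm d eps
                   + real d * (norm2 d p)\<^sup>2) / (sqrt (real d) * mt * (norm2 d p)\<^sup>2)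
       in Ct \<noteq> 1 \<longrightarrow>
          (\<exists>c0. cmod c0 = 1 \<and>
             norm2 d (Rmap d (measA_noisy d p eps) - smult c0 p) \<le>
             ((2 + sqrt 2) / mt * ((real d - real d * Ct - 1 + Ct ^ d) / (1 - Ct)) * sqrt (real d)
               + (1 - Ct ^ d) / (2 * sqrt (mt / sqrt (real d))))
             * (real d * real (2*d - 1) / (1 - Ct)) * (sup_norm d eps / norm2 d p))"
      unfolding Let_def by (intro impI) (rule core[OF assms(1) assms(2) deg p0 z0 hyp refl])
  qed
qed

end
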